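(* Let $Y$ be a solid vector space and $(X,d)$ a cone metric space over $Y$. Suppose $(x_n)$ is a sequence in $X$ with $d(x_n,x)\preceq b_n+\alpha\, d(y_n,y)+\beta\, d(z_n,z)$ for all $n$, where $x\in X$, $(b_n)$ is a sequence in $Y$ with $b_n\to0$, $(y_n)$ and $(z_n)$ are sequences in $X$ converging to $y$ and $z$ respectively, and $\alpha,\beta\ge0$ are real numbers. Then $x_n\to x$ in $X$.
   Context: Vector space with convergence: a real vector space $Y$ with a relation $\to$ between sequences in $Y$ and points of $Y$ (uniqueness of limits not assumed) such that (C1) $x_n\to x$, $y_n\to y$ imply $x_n+y_n\to x+y$; (C2) $x_n\to x$, $\lambda\in\mathbb R$ imply $\lambda x_n\to\lambda x$; (C3) $\lambda_n\to\lambda$ in $\mathbb R$ imply $\lambda_n x\to\lambda x$. $A\subseteq Y$ is open if $x_n\to x\in A$ implies $x_n\in A$ for all but finitely many $n$; closed if $x_n\to x$, $x_n\in A$ $\forall n$ imply $x\in A$; $A^\circ$ is the union of all open subsets of $A$. A cone is a nonempty closed $K$ with $\lambda K\subseteq K$ ($\lambda\ge0$), $K+K\subseteq K$, $K\cap(-K)=\{0\}$; solid if $K\ne\{0\}$, $K^\circ\ne\emptyset$. A vector ordering is a partial order $\preceq$ with (V1) $x\preceq y\Rightarrow x+z\preceq y+z$; (V2) $\lambda\ge0$, $x\preceq y\Rightarrow\lambda x\preceq\lambda y$; (V3) $x_n\to x$, $y_n\to y$, $x_n\preceq y_n$ $\forall n\Rightarrow x\preceq y$. Solid vector space: positive cone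 $K=\{x:x\succeq0\}$ solid, with $x\prec y$ iff $y-x\in K^\circ$. Cone metric space over $Y$: nonempty $X$ with $d\colon X\times X\to Y$, $d(x,y)\succeq0$, $d(x,y)=0$ iff $x=y$, $d(x,y)=d(y,x)$, $d(x,y)\preceq d(x,z)+d(z,y)$. Convergence in $X$: $x_n\to x$ iff for every $c\succ0$, $d(x_n,x)\prec c$ for all but finitely many $n$ (the topology with basis $U(x,r)=\{y:d(y,x)\prec r\}$, $r\succ 0$). *)

theory Defs
  imports Complex_Main
begin

definition vs_conv :: "((nat \<Rightarrow> 'a::real_vector) \<Rightarrow> 'a \<Rightarrow> bool) \<Rightarrow> bool" where
  "vs_conv conv \<longleftrightarrow>
     (\<forall>xs x ys y. conv xs x \<and> conv ys y \<longrightarrow> conv (\<lambda>n. xs n + ys n) (x + y)) \<and>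
     (\<forall>xs x (c::real). conv xs x \<longrightarrow> conv (\<lambda>n. c *\<^sub>R xs n) (c *\<^sub>R x)) \<and>
     (\<forall>(ls::nat \<Rightarrow> real) l x. ls \<longlonglongrightarrow> l \<longrightarrow> conv (\<lambda>n. ls n *\<^sub>R x) (l *\<^sub>R x))"

definition c_open :: "((nat \<Rightarrow> 'a) \<Rightarrow> 'a \<Rightarrow> bool) \<Rightarrow> 'a set \<Rightarrow> bool" where
  "c_open conv A \<longleftrightarrow> (\<forall>xs x. conv xs x \<and> x \<in> A \<longrightarrow> (\<forall>\<^sub>F n in sequentially. xs n \<in> A))"

definition c_closed :: "((nat \<Rightarrow> 'a) \<Rightarrow> 'a \<Rightarrow> bool) \<Rightarrow> 'a set \<Rightarrow> bool" where
  "c_closed conv A \<longleftrightarrow> (\<forall>xs x. conv xs x \<and> (\<forall>n. xs n \<in> A) \<longrightarrow> x \<in> A)"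

definition c_interior :: "((nat \<Rightarrow> 'a) \<Rightarrow> 'a \<Rightarrow> bool) \<Rightarrow> 'a set \<Rightarrow> 'a set" where
  "c_interior conv A = \<Union>{U. U \<subseteq> A \<and> c_open conv U}"

definition is_cone :: "((nat \<Rightarrow> 'a::real_vector) \<Rightarrow> 'a \<Rightarrow> bool) \<Rightarrow> 'a set \<Rightarrow> bool" where
  "is_cone conv K \<longleftrightarrow> K \<noteq> {} \<and> c_closed conv K \<and>
     (\<forall>(c::real) x. c \<ge> 0 \<and> x \<in> K \<longrightarrow> c *\<^sub>R x \<in> K) \<and>
     (\<forall>x y. x \<in> K \<and> y \<in> K \<longrightarrow> x + y \<in> K) \<and>
     K \<inter> uminus ` K = {0}"

definition solid_cone :: "((nat \<Rightarrow> 'a::real_vector) \<Rightarrow> 'a \<Rightarrow> bool) \<Rightarrow> 'a set \<Rightarrow> bool" where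
  "solid_cone conv K \<longleftrightarrow> is_cone conv K \<and> K \<noteq> {0} \<and> c_interior conv K \<noteq> {}"

definition vector_ordering ::
  "((nat \<Rightarrow> 'a::real_vector) \<Rightarrow> 'a \<Rightarrow> bool) \<Rightarrow> ('a \<Rightarrow> 'a \<Rightarrow> bool) \<Rightarrow> bool" where
  "vector_ordering conv le \<longleftrightarrow>
     (\<forall>x. le x x) \<and> (\<forall>x y. le x y \<and> le y x \<longrightarrow> x = y) \<and>
     (\<forall>x y z. le x y \<and> le y z \<longrightarrow> le x z) \<and>
     (\<forall>x y z. le x y \<longrightarrow> le (x + z) (y + z)) \<and>
     (\<forall>(c::real) x y. c \<ge> 0 \<and> le x y \<longrightarrow> le (c *\<^sub>R x) (c *\<^sub>R y)) \<and>
     (\<forall>xs x ys y. conv xs x \<and> conv ys y \<and> (\<forall>n. le (xs n) (ys n)) \<longrightarrow> le x y)"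

definition solid_vector_space ::
  "((nat \<Rightarrow> 'a::real_vector) \<Rightarrow> 'a \<Rightarrow> bool) \<Rightarrow> ('a \<Rightarrow> 'a \<Rightarrow> bool) \<Rightarrow> bool" where
  "solid_vector_space conv le \<longleftrightarrow> vs_conv conv \<and> vector_ordering conv le \<and>
     solid_cone conv {x. le 0 x}"

definition strict_lt ::
  "((nat \<Rightarrow> 'a::real_vector) \<Rightarrow> 'a \<Rightarrow> bool) \<Rightarrow> ('a \<Rightarrow> 'a \<Rightarrow> bool) \<Rightarrow> 'a \<Rightarrow> 'a \<Rightarrow> bool" where
  "strict_lt conv le x y \<longleftrightarrow> y - x \<in> c_interior conv {z. le 0 z}"

definition cone_metric :: "('a::real_vector \<Rightarrow> 'a \<Rightarrow> bool) \<Rightarrow> ('b \<Rightarrow> 'b \<Rightarrow> 'a) \<Rightarrow> bool" where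
  "cone_metric le d \<longleftrightarrow>
     (\<forall>x y. le 0 (d x y)) \<and> (\<forall>x y. d x y = 0 \<longleftrightarrow> x = y) \<and>
     (\<forall>x y. d x y = d y x) \<and> (\<forall>x y z. le (d x y) (d x z + d z y))"

definition cm_conv ::
  "((nat \<Rightarrow> 'a::real_vector) \<Rightarrow> 'a \<Rightarrow> bool) \<Rightarrow> ('a \<Rightarrow> 'a \<Rightarrow> bool) \<Rightarrow> ('b \<Rightarrow> 'b \<Rightarrow> 'a)
     \<Rightarrow> (nat \<Rightarrow> 'b) \<Rightarrow> 'b \<Rightarrow> bool" where
  "cm_conv conv le d xs x \<longleftrightarrow>
     (\<forall>c. strict_lt conv le 0 c \<longrightarrow> (\<forall>\<^sub>F n in sequentially. strict_lt conv le (d (xs n) x) c))"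

end

theory Submission
  imports Defs
begin

lemma interior_open: "c_open conv (c_interior conv A)"
proof -
  have "\<forall>\<^sub>F n in sequentially. xs n \<in> c_interior conv A"
    if h: "conv xs x" "x \<in> c_interior conv A" for xs x
  proof -
    obtain U where U: "x \<in> U" "U \<subseteq> A" "c_open conv U"
      using h(2) unfolding c_interior_def by blast
    then have "\<forall>\<^sub>F n in sequentially. xs n \<in> U" using h(1) unfolding c_open_def by blast
    then show ?thesis
      by (rule eventually_mono) (use U in \<open>auto simp: c_interior_def\<close>)
  qed
  then show ?thesis unfolding c_open_def by blast
qed

lemma interior_sub: "c_interior conv A \<subseteq> A"
  unfolding c_interior_def by blast

lemma interior_max: "U \<subseteq> A \<Longrightarrow> c_open conv U \<Longrightarrow> U \<subseteq> c_interior conv A"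
  unfolding c_interior_def by blast

lemma const_conv: "vs_conv conv \<Longrightarrow> conv (\<lambda>n. a) a"
proof -
  assume "vs_conv conv"
  then have "conv (\<lambda>n. (\<lambda>n. 1::real) n *\<^sub>R a) (1 *\<^sub>R a)"
    unfolding vs_conv_def using tendsto_const[of "1::real" sequentially] by blast
  then show ?thesis by simp
qed

lemma translate_open:
  assumes "vs_conv conv" "c_open conv U"
  shows "c_open conv ((\<lambda>v. v + u) ` U)"
  unfolding c_open_def
proof (intro allI impI)
  fix xs w assume h: "conv xs w \<and> w \<in> (\<lambda>v. v + u) ` U"
  then obtain v where v: "v \<in> U" "w = v + u" by blast
  have "conv (\<lambda>n. - u) (- u)" using const_conv[OF assms(1)] .
  then have "conv (\<lambda>n. xs n + - u) (w + - u)"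
    using assms(1) h unfolding vs_conv_def by blast
  moreover have "w + - u = v" using v by simp
  ultimately have "\<forall>\<^sub>F n in sequentially. xs n + - u \<in> U"
    using assms(2) v unfolding c_open_def by metis
  then show "\<forall>\<^sub>F n in sequentially. xs n \<in> (\<lambda>v. v + u) ` U"
  proof (rule eventually_mono)
    fix n assume "xs n + - u \<in> U"
    moreover have "xs n = (xs n + - u) + u" by simp
    ultimately show "xs n \<in> (\<lambda>v. v + u) ` U" by blast
  qed
qed

lemma scale_open:
  assumes "vs_conv conv" "c_open conv U" "(c::real) > 0"
  shows "c_open conv ((\<lambda>v. c *\<^sub>R v) ` U)"
  unfolding c_open_def
proof (intro allI impI)
  fix xs w assume h: "conv xs w \<and> w \<in> (\<lambda>v. c *\<^sub>R v) ` U"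
  then obtain v where v: "v \<in> U" "w = c *\<^sub>R v" by blast
  have "conv (\<lambda>n. (1/c) *\<^sub>R xs n) ((1/c) *\<^sub>R w)"
    using assms(1) h unfolding vs_conv_def by blast
  moreover have "(1/c) *\<^sub>R w = v" using v assms(3) by simp
  ultimately have "\<forall>\<^sub>F n in sequentially. (1/c) *\<^sub>R xs n \<in> U"
    using assms(2) v unfolding c_open_def by metis
  then show "\<forall>\<^sub>F n in sequentially. xs n \<in> (\<lambda>v. c *\<^sub>R v) ` U"
  proof (rule eventually_mono)
    fix n assume "(1/c) *\<^sub>R xs n \<in> U"
    moreover have "xs n = c *\<^sub>R ((1/c) *\<^sub>R xs n)" using assms(3) by simp
    ultimately show "xs n \<in> (\<lambda>v. c *\<^sub>R v) ` U" by blast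
  qed
qed

lemma K_add:
  assumes "vector_ordering conv le" "le 0 a" "le 0 b"
  shows "le 0 (a + b)"
proof -
  have "le (0 + a) (b + a)" using assms unfolding vector_ordering_def by blast
  then show ?thesis using assms unfolding vector_ordering_def by (metis add.commute add_0)
qed

lemma K_scale:
  assumes "vector_ordering conv le" "le 0 a" "(c::real) \<ge> 0"
  shows "le 0 (c *\<^sub>R a)"
  using assms unfolding vector_ordering_def by (metis scaleR_zero_right)

lemma le_iff:
  assumes "vector_ordering conv le"
  shows "le a b \<longleftrightarrow> le 0 (b - a)"
proof
  assume "le a b"
  then have "le (a + - a) (b + - a)" using assms unfolding vector_ordering_def by blast
  then show "le 0 (b - a)" by simp
next
  assume "le 0 (b - a)"
  then have "le (0 + a) (b - a + a)" using assms unfolding vector_ordering_def by blast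
  then show "le a b" by simp
qed

lemma interior_add:
  assumes "vs_conv conv" "vector_ordering conv le"
    "p \<in> c_interior conv {z. le 0 z}" "le 0 q"
  shows "p + q \<in> c_interior conv {z. le 0 z}"
proof -
  let ?I = "c_interior conv {z. le 0 z}"
  have "(\<lambda>v. v + q) ` ?I \<subseteq> {z. le 0 z}"
    using interior_sub[of conv "{z. le 0 z}"] K_add[OF assms(2)] assms(4) by blast
  moreover have "c_open conv ((\<lambda>v. v + q) ` ?I)"
    by (rule translate_open[OF assms(1) interior_open])
  ultimately have "(\<lambda>v. v + q) ` ?I \<subseteq> ?I" by (rule interior_max)
  then show ?thesis using assms(3) by blast
qed

lemma interior_scale:
  assumes "vs_conv conv" "vector_ordering conv le"
    "p \<in> c_interior conv {z. le 0 z}" "(c::real) > 0"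
  shows "c *\<^sub>R p \<in> c_interior conv {z. le 0 z}"
proof -
  let ?I = "c_interior conv {z. le 0 z}"
  have "(\<lambda>v. c *\<^sub>R v) ` ?I \<subseteq> {z. le 0 z}"
    using interior_sub[of conv "{z. le 0 z}"] K_scale[OF assms(2)] assms(4) by fastforce
  moreover have "c_open conv ((\<lambda>v. c *\<^sub>R v) ` ?I)"
    by (rule scale_open[OF assms(1) interior_open assms(4)])
  ultimately have "(\<lambda>v. c *\<^sub>R v) ` ?I \<subseteq> ?I" by (rule interior_max)
  then show ?thesis using assms(3) by blast
qed

lemma coef_eq: "(\<alpha>::real) \<ge> 0 \<Longrightarrow> 1/3 - \<alpha> * (1/(3*(\<alpha>+1))) = 1/(3*(\<alpha>+1))"
  by (simp add: field_simps)

lemma term_bound: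
  assumes "vector_ordering conv le" "(\<alpha>::real) \<ge> 0"
    "le 0 ((1/(3*(\<alpha>+1))) *\<^sub>R c)" "le 0 ((1/(3*(\<alpha>+1))) *\<^sub>R c - e)"
  shows "le 0 ((1/3) *\<^sub>R c - \<alpha> *\<^sub>R e)"
proof -
  let ?c' = "(1/(3*(\<alpha>+1))) *\<^sub>R c"
  have "(1/3) *\<^sub>R c - \<alpha> *\<^sub>R e = ((1/3) *\<^sub>R c - \<alpha> *\<^sub>R ?c') + \<alpha> *\<^sub>R (?c' - e)"
    by (simp add: algebra_simps)
  also have "(1/3) *\<^sub>R c - \<alpha> *\<^sub>R ?c' = (1/3 - \<alpha> * (1/(3*(\<alpha>+1)))) *\<^sub>R c"
    by (simp add: algebra_simps)
  also have "\<dots> = ?c'" using coef_eq[OF assms(2)] by simp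
  finally show ?thesis
    using K_add[OF assms(1) assms(3) K_scale[OF assms(1) assms(4) assms(2)]] by simp
qed

theorem theorem9p16:
  fixes conv :: "(nat \<Rightarrow> 'a::real_vector) \<Rightarrow> 'a \<Rightarrow> bool"
    and le :: "'a \<Rightarrow> 'a \<Rightarrow> bool"
    and d :: "'b \<Rightarrow> 'b \<Rightarrow> 'a"
    and xs ys zs :: "nat \<Rightarrow> 'b" and x y z :: 'b
    and b :: "nat \<Rightarrow> 'a" and \<alpha> \<beta> :: real
  assumes "solid_vector_space conv le"
    and "cone_metric le d"
    and "\<And>n. le (d (xs n) x) (b n + \<alpha> *\<^sub>R d (ys n) y + \<beta> *\<^sub>R d (zs n) z)"
    and "conv b 0"
    and "cm_conv conv le d ys y"
    and "cm_conv conv le d zs z"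
    and "\<alpha> \<ge> 0" and "\<beta> \<ge> 0"
  shows "cm_conv conv le d xs x"
  unfolding cm_conv_def
proof (intro allI impI)
  let ?I = "c_interior conv {z. le 0 z}"
  have vs: "vs_conv conv" and vo: "vector_ordering conv le"
    using assms(1) unfolding solid_vector_space_def by auto
  fix c assume "strict_lt conv le 0 c"
  then have cI: "c \<in> ?I" unfolding strict_lt_def by simp
  have sub: "\<And>v. v \<in> ?I \<Longrightarrow> le 0 v" using interior_sub[of conv "{z. le 0 z}"] by blast
  define c3 where "c3 = (1/3::real) *\<^sub>R c"
  define cy where "cy = (1/(3*(\<alpha>+1))) *\<^sub>R c"
  define cz where "cz = (1/(3*(\<beta>+1))) *\<^sub>R c"
  have c3I: "c3 \<in> ?I" unfolding c3_def by (rule interior_scale[OF vs vo cI]) simp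
  have cyI: "cy \<in> ?I" unfolding cy_def by (rule interior_scale[OF vs vo cI]) (use assms(7) in simp)
  have czI: "cz \<in> ?I" unfolding cz_def by (rule interior_scale[OF vs vo cI]) (use assms(8) in simp)
  have "conv (\<lambda>n. (-1::real) *\<^sub>R b n) ((-1::real) *\<^sub>R 0)"
    using vs assms(4) unfolding vs_conv_def by blast
  then have "conv (\<lambda>n. c3 + (-1::real) *\<^sub>R b n) (c3 + (-1::real) *\<^sub>R 0)"
    using vs const_conv[OF vs, of c3] unfolding vs_conv_def by blast
  then have "conv (\<lambda>n. c3 - b n) c3" by simp
  then have E1: "\<forall>\<^sub>F n in sequentially. c3 - b n \<in> ?I"
    using interior_open[of conv "{z. le 0 z}", unfolded c_open_def] c3I by blast
  have E2: "\<forall>\<^sub>F n in sequentially. cy - d (ys n) y \<in> ?I"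
    using assms(5)[unfolded cm_conv_def, rule_format, of cy] cyI unfolding strict_lt_def by simp
  have E3: "\<forall>\<^sub>F n in sequentially. cz - d (zs n) z \<in> ?I"
    using assms(6)[unfolded cm_conv_def, rule_format, of cz] czI unfolding strict_lt_def by simp
  show "\<forall>\<^sub>F n in sequentially. strict_lt conv le (d (xs n) x) c"
    using E1 E2 E3
  proof eventually_elim
    case (elim n)
    have Ty: "le 0 (c3 - \<alpha> *\<^sub>R d (ys n) y)"
      unfolding c3_def by (rule term_bound[OF vo assms(7)])
        (use sub cyI elim(2) in \<open>auto simp: cy_def\<close>)
    have Tz: "le 0 (c3 - \<beta> *\<^sub>R d (zs n) z)"
      unfolding c3_def by (rule term_bound[OF vo assms(8)])
        (use sub czI elim(3) in \<open>auto simp: cz_def\<close>)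
    have T: "le 0 ((b n + \<alpha> *\<^sub>R d (ys n) y + \<beta> *\<^sub>R d (zs n) z) - d (xs n) x)"
      using assms(3) le_iff[OF vo] by blast
    let ?Q = "(c3 - \<alpha> *\<^sub>R d (ys n) y) + (c3 - \<beta> *\<^sub>R d (zs n) z)
       + ((b n + \<alpha> *\<^sub>R d (ys n) y + \<beta> *\<^sub>R d (zs n) z) - d (xs n) x)"
    have Q: "le 0 ?Q" using K_add[OF vo] Ty Tz T by blast
    have "c = c3 + c3 + c3" unfolding c3_def
      by (simp flip: scaleR_left_distrib)
    then have eq: "c - d (xs n) x = (c3 - b n) + ?Q" by (simp add: algebra_simps)
    show ?case unfolding strict_lt_def eq
      by (rule interior_add[OF vs vo elim(1) Q])
  qed
qed

end
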